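(* Let $k,h\ge1$ and let $G=\vartheta_{B_k}^{\mathcal B,h}$ be a $k$-molecule. Then (1) the connectivity of $G$ is $k$; (2) $B_k$ is an edge cover set of $G$ of minimum cardinality, so $\mathrm{Cycl}(G)=k$; and (3) $\mathrm{Ent}(G)=k$.
   Context: Graphs are finite and undirected. A graph is $k$-connected if one must remove at least $k$ vertices to disconnect it; the connectivity is the largest such $k$ (by convention the complete graph $K_m$, $m\ge3$, has connectivity $m-1$). $k$-molecule: for $k,h\ge1$, $B_k=\{b_1,\dots,b_k\}$ and a set $\mathcal B$ of edges among vertices of $B_k$, $\vartheta_{B_k}^{\mathcal B,h}$ is the graph with vertex set $B_k\cup\{v_1,\dots,v_h\}$ and edge set $\mathcal B\cup\{v_ib_j:1\le i\le h,1\le j\le k\}$, where it is required that $h\ge k-k'$, $k'$ being the connectivity of the subgraph induced by $B_k$. An edge cover set of $G$ is a set $X\subseteq V_G$ containing at least one endpoint of every edge (i.e. a vertex cover). $\mathrm{Cycl}(G)$ (cyclicity) is the minimum size of a feedback vertex set of the symmetric digraph of $G$ (each edge viewed as two opposite arcs, so each edge forms a directed 2-cycle), which equals the minimum size of an edge cover set. Entanglement: in the game $\mathrm{Ent}(G,k)$ Thief plays against $k$ cops. Initially no cop is placed and Thief picks a vertex. Each round, Cops may do nothing, place a new cop (at most $k$ in total) on Thief's current vertex, or move a placed cop to Thief's current vertex; then Thief must move along an edge to an adjacent vertex not occupied by a cop, and is caught if he cannot. Infinite plays are won by Thief. $\mathrm{Ent}(G)$ is the least $k$ for which Cops have a winning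 strategy. *)

theory Defs
  imports Main
begin

definition graph :: "'a set \<Rightarrow> 'a set set \<Rightarrow> bool" where
  "graph V E \<longleftrightarrow> finite V \<and> (\<forall>e\<in>E. e \<subseteq> V \<and> card e = 2)"

definition adj :: "'a set set \<Rightarrow> 'a \<Rightarrow> 'a \<Rightarrow> bool" where
  "adj E x y \<longleftrightarrow> x \<noteq> y \<and> {x, y} \<in> E"

definition connected_on :: "'a set \<Rightarrow> 'a set set \<Rightarrow> bool" where
  "connected_on V E \<longleftrightarrow>
     (\<forall>x\<in>V. \<forall>y\<in>V. (\<lambda>a b. a \<in> V \<and> b \<in> V \<and> adj E a b)\<^sup>*\<^sup>* x y)"

text \<open>Connectivity: the least number of vertices whose removal disconnects the graph or
  leaves at most one vertex (so K_m has connectivity m-1).\<close>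
definition connectivity :: "'a set \<Rightarrow> 'a set set \<Rightarrow> nat" where
  "connectivity V E =
     Min {card S | S. S \<subseteq> V \<and> (\<not> connected_on (V - S) E \<or> card (V - S) \<le> 1)}"

definition is_edge_cover :: "'a set \<Rightarrow> 'a set set \<Rightarrow> 'a set \<Rightarrow> bool" where
  "is_edge_cover V E X \<longleftrightarrow> X \<subseteq> V \<and> (\<forall>e\<in>E. e \<inter> X \<noteq> {})"

text \<open>Feedback vertex set of the symmetric digraph of (V,E): every edge gives the two
  arcs a->b and b->a; removing X leaves no directed cycle.\<close>
definition is_fvs_sym :: "'a set \<Rightarrow> 'a set set \<Rightarrow> 'a set \<Rightarrow> bool" where
  "is_fvs_sym V E X \<longleftrightarrow> X \<subseteq> V \<and>
     \<not> (\<exists>x. (\<lambda>a b. a \<in> V - X \<and> b \<in> V - X \<and> adj E a b)\<^sup>+\<^sup>+ x x)"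

definition cyclicity :: "'a set \<Rightarrow> 'a set set \<Rightarrow> nat" where
  "cyclicity V E = Min {card X | X. is_fvs_sym V E X}"

text \<open>Cops' positions are a set C of occupied vertices (cops always go to the Thief's
  current vertex, which is never occupied, so distinct cops occupy distinct vertices and the
  number of placed cops is card C).\<close>
definition legal_cop_move :: "nat \<Rightarrow> 'a \<Rightarrow> 'a set \<Rightarrow> 'a set \<Rightarrow> bool" where
  "legal_cop_move k v C C' \<longleftrightarrow>
     C' = C \<or> (card C < k \<and> C' = insert v C) \<or> (\<exists>c\<in>C. C' = insert v (C - {c}))"

text \<open>A Cops strategy maps the history of Thief positions [t 0, ..., t n] (all Cops moves are
  determined by the strategy) to the new cop configuration in round n.\<close>
type_synonym 'a cop_strategy = "'a list \<Rightarrow> 'a set"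

fun cop_config :: "'a cop_strategy \<Rightarrow> (nat \<Rightarrow> 'a) \<Rightarrow> nat \<Rightarrow> 'a set" where
  "cop_config \<sigma> t 0 = {}"
| "cop_config \<sigma> t (Suc n) = \<sigma> (map t [0..<Suc n])"

definition consistent_prefix ::
  "'a set \<Rightarrow> 'a set set \<Rightarrow> 'a cop_strategy \<Rightarrow> (nat \<Rightarrow> 'a) \<Rightarrow> nat \<Rightarrow> bool" where
  "consistent_prefix V E \<sigma> t n \<longleftrightarrow> t 0 \<in> V \<and>
     (\<forall>j<n. adj E (t j) (t (Suc j)) \<and> t (Suc j) \<notin> cop_config \<sigma> t (Suc j))"

text \<open>\<sigma> is a winning strategy for k cops: it always prescribes legal moves, and there is
  no infinite play consistent with it (infinite plays are won by Thief; a finite play ends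
  with Thief caught).\<close>
definition cops_winning :: "'a set \<Rightarrow> 'a set set \<Rightarrow> nat \<Rightarrow> 'a cop_strategy \<Rightarrow> bool" where
  "cops_winning V E k \<sigma> \<longleftrightarrow>
     (\<forall>t n. consistent_prefix V E \<sigma> t n \<longrightarrow>
        legal_cop_move k (t n) (cop_config \<sigma> t n) (cop_config \<sigma> t (Suc n)))
   \<and> \<not> (\<exists>t. \<forall>n. consistent_prefix V E \<sigma> t n)"

definition entanglement :: "'a set \<Rightarrow> 'a set set \<Rightarrow> nat" where
  "entanglement V E = (LEAST k. \<exists>\<sigma>. cops_winning V E k \<sigma>)"

definition mol_V :: "'a set \<Rightarrow> 'a set \<Rightarrow> 'a set" where
  "mol_V B W = B \<union> W"

definition mol_E :: "'a set \<Rightarrow> 'a set set \<Rightarrow> 'a set \<Rightarrow> 'a set set" where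
  "mol_E B \<B> W = \<B> \<union> {{w, b} | w b. w \<in> W \<and> b \<in> B}"

text \<open>B = B_k (k vertices), \<B> a set of edges among B, W = {v_1,...,v_h} (h new vertices),
  with h \<ge> k - k' where k' is the connectivity of the subgraph induced by B.\<close>
definition is_molecule :: "nat \<Rightarrow> nat \<Rightarrow> 'a set \<Rightarrow> 'a set set \<Rightarrow> 'a set \<Rightarrow> bool" where
  "is_molecule k h B \<B> W \<longleftrightarrow>
     k \<ge> 1 \<and> h \<ge> 1 \<and> finite B \<and> finite W \<and> card B = k \<and> card W = h \<and> B \<inter> W = {} \<and>
     \<B> \<subseteq> {{x, y} | x y. x \<in> B \<and> y \<in> B \<and> x \<noteq> y} \<and>
     int h \<ge> int k - int (connectivity B \<B>)"

end

theory Submission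
  imports Defs
begin

primrec hist :: "('a list \<Rightarrow> 'a) \<Rightarrow> 'a \<Rightarrow> nat \<Rightarrow> 'a list" where
  "hist f x0 0 = [x0]"
| "hist f x0 (Suc n) = hist f x0 n @ [f (hist f x0 n)]"

lemma hist_map: "map (\<lambda>i. last (hist f x0 i)) [0..<Suc n] = hist f x0 n"
  by (induction n) auto

lemma legal_card:
  assumes "legal_cop_move m v C C'" "finite C" "card C \<le> m"
  shows "finite C' \<and> card C' \<le> m"
proof -
  have "C' = C \<or> (card C < m \<and> C' = insert v C) \<or> (\<exists>c\<in>C. C' = insert v (C - {c}))"
    using assms(1) unfolding legal_cop_move_def by simp
  thus ?thesis
  proof (elim disjE conjE bexE)
    assume "C' = C" thus ?thesis using assms by simp
  next
    assume "card C < m" "C' = insert v C"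
    thus ?thesis using assms(2) card_insert_le_m1[of m C v] by (simp add: card_insert_if)
  next
    fix c assume c: "c \<in> C" "C' = insert v (C - {c})"
    have "card (C - {c}) = card C - 1" using c(1) assms(2) by simp
    moreover have "card C \<ge> 1" using c(1) assms(2) by (metis One_nat_def Suc_leI card_gt_0_iff empty_iff)
    ultimately show ?thesis using c(2) assms(2,3) by (auto simp add: card_insert_if)
  qed
qed

locale mol =
  fixes k h :: nat and B W :: "'a set" and Bb :: "'a set set"
  assumes M: "is_molecule k h B Bb W"
begin

abbreviation "V \<equiv> mol_V B W"
abbreviation "E \<equiv> mol_E B Bb W"

lemma k1: "k \<ge> 1" and h1: "h \<ge> 1" and finB: "finite B" and finW: "finite W"
  and cB: "card B = k" and cW: "card W = h" and disj: "B \<inter> W = {}"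
  and Bbs: "Bb \<subseteq> {{x, y} | x y. x \<in> B \<and> y \<in> B \<and> x \<noteq> y}"
  and hk: "int h \<ge> int k - int (connectivity B Bb)"
  using M unfolding is_molecule_def by auto

lemma hk': "k \<le> h + connectivity B Bb" using hk by linarith

lemma finV: "finite V" using finB finW by (simp add: mol_V_def)

lemma Wne: "W \<noteq> {}" using cW h1 by auto

lemma edge_WB: "w \<in> W \<Longrightarrow> b \<in> B \<Longrightarrow> adj E w b \<and> adj E b w"
  using disj unfolding adj_def mol_E_def by (auto simp: insert_commute)

lemma adj_Bb: "adj Bb x y \<Longrightarrow> adj E x y"
  unfolding adj_def mol_E_def by auto

lemma adj_cases: "adj E x y \<Longrightarrow> x \<in> V \<and> y \<in> V \<and> (x \<in> W \<longrightarrow> y \<in> B)"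
proof -
  assume a: "adj E x y"
  hence ne: "x \<noteq> y" and e: "{x,y} \<in> E" unfolding adj_def by auto
  show ?thesis
  proof (cases "{x,y} \<in> Bb")
    case True
    then obtain a c where "{x,y} = {a,c}" "a \<in> B" "c \<in> B" using Bbs by blast
    thus ?thesis using disj by (auto simp: mol_V_def doubleton_eq_iff)
  next
    case False
    then obtain w b where "{x,y} = {w,b}" "w \<in> W" "b \<in> B" using e unfolding mol_E_def by blast
    thus ?thesis using disj ne by (auto simp: mol_V_def doubleton_eq_iff)
  qed
qed

lemma edges2: "e \<in> E \<Longrightarrow> \<exists>a b. e = {a,b} \<and> a \<noteq> b \<and> a \<in> V \<and> b \<in> V"
proof -
  assume "e \<in> E"
  hence "e \<in> Bb \<or> e \<in> {{w, b} | w b. w \<in> W \<and> b \<in> B}" unfolding mol_E_def by blast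
  thus ?thesis
  proof
    assume "e \<in> Bb"
    then obtain x y where "e = {x,y}" "x \<in> B" "y \<in> B" "x \<noteq> y" using Bbs by blast
    thus ?thesis unfolding mol_V_def by blast
  next
    assume "e \<in> {{w, b} | w b. w \<in> W \<and> b \<in> B}"
    then obtain x y where "e = {x,y}" "x \<in> W" "y \<in> B" by blast
    moreover hence "x \<noteq> y" using disj by blast
    ultimately show ?thesis unfolding mol_V_def by blast
  qed
qed

lemma L1:
  assumes "S \<subseteq> B" "card S < connectivity B Bb"
  shows "connected_on (B - S) Bb \<and> 2 \<le> card (B - S)"
proof (rule ccontr)
  assume "\<not> ?thesis"
  hence q: "card S \<in> {card S | S. S \<subseteq> B \<and> (\<not> connected_on (B - S) Bb \<or> card (B - S) \<le> 1)}"
    using assms(1) by auto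
  have "finite {card S | S. S \<subseteq> B \<and> (\<not> connected_on (B - S) Bb \<or> card (B - S) \<le> 1)}"
    by (rule finite_subset[of _ "card ` Pow B"]) (auto simp: finB)
  hence "connectivity B Bb \<le> card S" using q unfolding connectivity_def by (rule Min_le)
  thus False using assms(2) by simp
qed

lemma L3:
  assumes "S \<subseteq> B" "card S < connectivity B Bb" "v \<in> B"
  shows "\<exists>u. u \<in> B \<and> u \<notin> S \<and> u \<noteq> v \<and> adj Bb v u"
proof -
  let ?S0 = "S - {v}"
  have "card ?S0 \<le> card S" using finB assms(1) by (meson card_Diff1_le finite_subset)
  hence c: "connected_on (B - ?S0) Bb" and c2: "2 \<le> card (B - ?S0)"
    using L1[of ?S0] assms by auto
  have vin: "v \<in> B - ?S0" using assms by auto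
  obtain y where y: "y \<in> B - ?S0" "y \<noteq> v"
  proof (rule ccontr)
    assume "\<not> thesis"
    hence "B - ?S0 \<subseteq> {v}" using that by blast
    hence "card (B - ?S0) \<le> card {v}" by (intro card_mono) auto
    hence "card (B - ?S0) \<le> 1" by simp
    thus False using c2 by simp
  qed
  let ?R = "\<lambda>a b. a \<in> B - ?S0 \<and> b \<in> B - ?S0 \<and> adj Bb a b"
  have "?R\<^sup>*\<^sup>* v y" using c vin y unfolding connected_on_def by blast
  then show ?thesis
  proof (cases rule: converse_rtranclpE)
    case base thus ?thesis using y by simp
  next
    case (step u) thus ?thesis unfolding adj_def by auto
  qed
qed


lemma connected_on_mono: "E1 \<subseteq> E2 \<Longrightarrow> connected_on U E1 \<Longrightarrow> connected_on U E2"
  unfolding connected_on_def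
proof (intro ballI)
  fix x y assume a: "E1 \<subseteq> E2" "\<forall>x\<in>U. \<forall>y\<in>U. (\<lambda>a b. a \<in> U \<and> b \<in> U \<and> adj E1 a b)\<^sup>*\<^sup>* x y"
    "x \<in> U" "y \<in> U"
  hence "(\<lambda>a b. a \<in> U \<and> b \<in> U \<and> adj E1 a b)\<^sup>*\<^sup>* x y" by blast
  thus "(\<lambda>a b. a \<in> U \<and> b \<in> U \<and> adj E2 a b)\<^sup>*\<^sup>* x y"
    by (rule rtranclp_mono[THEN predicate2D, rotated]) (use a(1) in \<open>auto simp: adj_def\<close>)
qed

lemma sym_rt: assumes "\<And>a c. R a c \<Longrightarrow> R c a" and "R\<^sup>*\<^sup>* x y" shows "R\<^sup>*\<^sup>* y x"
  using assms(2)
proof (induction rule: rtranclp_induct)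
  case base thus ?case by simp
next
  case (step y z) thus ?case using assms(1) by (meson converse_rtranclp_into_rtranclp)
qed

lemma conn_lower:
  assumes S: "S \<subseteq> V" "card S < k"
  shows "connected_on (V - S) E \<and> 2 \<le> card (V - S)"
proof (cases "W \<subseteq> S")
  case True
  have finS: "finite S" using S finV finite_subset by blast
  have XE: "(S \<inter> B) \<union> W = S" using True S unfolding mol_V_def by blast
  have "card ((S \<inter> B) \<union> W) = card (S \<inter> B) + card W"
    by (rule card_Un_disjoint) (use finS finW disj in auto)
  hence "card S = card (S \<inter> B) + card W" by (simp only: XE)
  hence "card (S \<inter> B) < connectivity B Bb" using S hk' cW by linarith
  from L1[OF _ this] have "connected_on (B - S \<inter> B) Bb" "2 \<le> card (B - S \<inter> B)" by auto
  moreover have "V - S = B - S \<inter> B" using True disj unfolding mol_V_def by blast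
  moreover have "Bb \<subseteq> E" unfolding mol_E_def by blast
  ultimately show ?thesis using connected_on_mono[of Bb E "V - S"] by simp
next
  case False
  then obtain w where w: "w \<in> W" "w \<notin> S" by blast
  have "\<not> B \<subseteq> S"
  proof
    assume "B \<subseteq> S"
    hence "card B \<le> card S" using S finV by (meson card_mono finite_subset)
    thus False using S cB by simp
  qed
  then obtain b where b: "b \<in> B" "b \<notin> S" by blast
  let ?R = "\<lambda>a c. a \<in> V - S \<and> c \<in> V - S \<and> adj E a c"
  have symR: "\<And>a c. ?R a c \<Longrightarrow> ?R c a" unfolding adj_def by (auto simp: insert_commute)
  have wV: "w \<in> V - S" "b \<in> V - S" using w b unfolding mol_V_def by auto
  have hub: "?R\<^sup>*\<^sup>* x w" if x: "x \<in> V - S" for x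
  proof (cases "x \<in> B")
    case True
    show ?thesis
    proof (cases "x = w")
      case False
      hence "?R x w" using x wV edge_WB[OF w(1) True] by blast
      thus ?thesis by (rule r_into_rtranclp)
    qed simp
  next
    case False
    hence xW: "x \<in> W" using x unfolding mol_V_def by blast
    have "?R x b" using x wV edge_WB[OF xW b(1)] by blast
    moreover have "?R b w" using wV edge_WB[OF w(1) b(1)] by blast
    ultimately
    show ?thesis by (rule rtranclp.rtrancl_into_rtrancl[OF r_into_rtranclp])
  qed
  have "connected_on (V - S) E" unfolding connected_on_def
  proof (intro ballI)
    fix x y assume "x \<in> V - S" "y \<in> V - S"
    hence "?R\<^sup>*\<^sup>* x w" "?R\<^sup>*\<^sup>* y w" using hub by auto
    moreover have "?R\<^sup>*\<^sup>* w y" by (rule sym_rt[OF symR \<open>?R\<^sup>*\<^sup>* y w\<close>])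
    ultimately have "?R\<^sup>*\<^sup>* x w" "?R\<^sup>*\<^sup>* w y" by auto
    thus "?R\<^sup>*\<^sup>* x y" by (rule rtranclp_trans)
  qed
  moreover have "2 \<le> card (V - S)"
  proof -
    have "{w, b} \<subseteq> V - S" using wV by auto
    moreover have "w \<noteq> b" using w b disj by blast
    ultimately show ?thesis using finV card_mono[of "V - S" "{w,b}"] by auto
  qed
  ultimately show ?thesis by blast
qed

lemma conn_eq: "connectivity V E = k"
  unfolding connectivity_def
proof (rule Min_eqI)
  show "finite {card S |S. S \<subseteq> V \<and> (\<not> connected_on (V - S) E \<or> card (V - S) \<le> 1)}"
    by (rule finite_subset[of _ "card ` Pow V"]) (auto simp: finV)
next
  fix y assume "y \<in> {card S |S. S \<subseteq> V \<and> (\<not> connected_on (V - S) E \<or> card (V - S) \<le> 1)}"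
  then obtain S where "y = card S" "S \<subseteq> V" "\<not> connected_on (V - S) E \<or> card (V - S) \<le> 1" by blast
  thus "k \<le> y" using conn_lower[of S] by fastforce
next
  have VB: "V - B = W" using disj unfolding mol_V_def by blast
  have "\<not> connected_on W E \<or> card W \<le> 1"
  proof (rule disjCI)
    assume "\<not> card W \<le> 1"
    then obtain w1 w2 where ww: "w1 \<in> W" "w2 \<in> W" "w1 \<noteq> w2"
      using card_le_Suc0_iff_eq[OF finW] by auto
    show "\<not> connected_on W E"
    proof
      assume "connected_on W E"
      hence "(\<lambda>a b. a \<in> W \<and> b \<in> W \<and> adj E a b)\<^sup>*\<^sup>* w1 w2" using ww unfolding connected_on_def by blast
      thus False
      proof (cases rule: converse_rtranclpE)
        case base thus ?thesis using ww by simp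
      next
        case (step u) thus ?thesis using adj_cases[of w1 u] disj by blast
      qed
    qed
  qed
  moreover have "B \<subseteq> V" unfolding mol_V_def by blast
  ultimately show "k \<in> {card S |S. S \<subseteq> V \<and> (\<not> connected_on (V - S) E \<or> card (V - S) \<le> 1)}"
    using VB cB by auto
qed

lemma cover_B: "is_edge_cover V E B"
  unfolding is_edge_cover_def
proof
  show "B \<subseteq> V" unfolding mol_V_def by blast
  show "\<forall>e\<in>E. e \<inter> B \<noteq> {}"
  proof
    fix e assume "e \<in> E"
    hence "e \<in> Bb \<or> e \<in> {{w, b} | w b. w \<in> W \<and> b \<in> B}" unfolding mol_E_def by blast
    thus "e \<inter> B \<noteq> {}" using Bbs by blast
  qed
qed

lemma cover_min: assumes "is_edge_cover V E X" shows "k \<le> card X"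
proof (rule ccontr)
  assume "\<not> k \<le> card X"
  hence lt: "card X < k" by simp
  have XV: "X \<subseteq> V" and cov: "\<forall>e\<in>E. e \<inter> X \<noteq> {}" using assms unfolding is_edge_cover_def by auto
  have finX: "finite X" using XV finV finite_subset by blast
  have "\<not> B \<subseteq> X"
  proof
    assume "B \<subseteq> X"
    hence "card B \<le> card X" using finX by (meson card_mono)
    thus False using lt cB by simp
  qed
  then obtain b where b: "b \<in> B" "b \<notin> X" by blast
  have WX: "W \<subseteq> X"
  proof
    fix w assume w: "w \<in> W"
    have "{w, b} \<in> E" using w b unfolding mol_E_def by blast
    with cov have "{w, b} \<inter> X \<noteq> {}" by (rule bspec)
    thus "w \<in> X" using b(2) by blast
  qed
  have XE: "(X \<inter> B) \<union> W = X" using WX XV unfolding mol_V_def by blast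
  have "card ((X \<inter> B) \<union> W) = card (X \<inter> B) + card W"
    by (rule card_Un_disjoint) (use finX finW disj in auto)
  hence "card X = card (X \<inter> B) + card W" by (simp only: XE)
  hence "card (X \<inter> B) < connectivity B Bb" using lt hk' cW by simp
  have "X \<inter> B \<subseteq> B" by blast
  from L3[OF this \<open>card (X \<inter> B) < connectivity B Bb\<close> b(1)]
  obtain u where u: "u \<in> B" "u \<notin> X \<inter> B" "adj Bb b u" by blast
  have "{b, u} \<in> Bb" using u(3) unfolding adj_def by blast
  hence be: "{b, u} \<in> E" unfolding mol_E_def by (rule UnI1)
  have "{b, u} \<inter> X \<noteq> {}" using cov be by (rule bspec)
  moreover have "{b, u} \<inter> X = {}" using u(1,2) b(2) by blast
  ultimately show False by simp
qed

lemma fvs_iff: "is_fvs_sym V E X \<longleftrightarrow> is_edge_cover V E X"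
proof
  assume a: "is_fvs_sym V E X"
  show "is_edge_cover V E X" unfolding is_edge_cover_def
  proof (intro conjI ballI)
    show "X \<subseteq> V" using a unfolding is_fvs_sym_def by blast
    fix e assume e: "e \<in> E"
    show "e \<inter> X \<noteq> {}"
    proof
      assume d: "e \<inter> X = {}"
      obtain x y where xy: "e = {x,y}" "x \<noteq> y" "x \<in> V" "y \<in> V" using edges2[OF e] by blast
      let ?R = "\<lambda>a b. a \<in> V - X \<and> b \<in> V - X \<and> adj E a b"
      have "?R x y" "?R y x" using xy d e unfolding adj_def by (auto simp: insert_commute)
      hence "?R\<^sup>+\<^sup>+ x x" by (rule tranclp.trancl_into_trancl[OF tranclp.r_into_trancl])
      hence "\<exists>x. ?R\<^sup>+\<^sup>+ x x" by (rule exI)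
      thus False using a unfolding is_fvs_sym_def by simp
    qed
  qed
next
  assume a: "is_edge_cover V E X"
  show "is_fvs_sym V E X" unfolding is_fvs_sym_def
  proof (intro conjI notI)
    show "X \<subseteq> V" using a unfolding is_edge_cover_def by blast
    assume "\<exists>x. (\<lambda>a b. a \<in> V - X \<and> b \<in> V - X \<and> adj E a b)\<^sup>+\<^sup>+ x x"
    then obtain x where "(\<lambda>a b. a \<in> V - X \<and> b \<in> V - X \<and> adj E a b)\<^sup>+\<^sup>+ x x" by blast
    then obtain y where "x \<in> V - X" "y \<in> V - X" "adj E x y" by (auto dest!: tranclpD)
    hence yE: "{x,y} \<in> E" and "{x,y} \<inter> X = {}" unfolding adj_def by auto
    have "\<forall>e\<in>E. e \<inter> X \<noteq> {}" using a unfolding is_edge_cover_def by simp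
    hence "{x,y} \<inter> X \<noteq> {}" using yE by (rule bspec)
    thus False using \<open>{x,y} \<inter> X = {}\<close> by simp
  qed
qed

lemma cyc_eq: "cyclicity V E = k"
  unfolding cyclicity_def fvs_iff
proof (rule Min_eqI)
  show "finite {card X |X. is_edge_cover V E X}"
    by (rule finite_subset[of _ "card ` Pow V"]) (auto simp: finV is_edge_cover_def)
  show "\<And>y. y \<in> {card X |X. is_edge_cover V E X} \<Longrightarrow> k \<le> y" using cover_min by blast
  show "k \<in> {card X |X. is_edge_cover V E X}" using cover_B cB by blast
qed


lemma cc0: "cop_config (\<lambda>xs. set xs \<inter> B) t n = t ` {..<n} \<inter> B"
proof (cases n)
  case 0 thus ?thesis by simp
next
  case (Suc m)
  have "set [0..<Suc m] = {..<Suc m}" by auto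
  thus ?thesis using Suc by (simp add: lessThan_Suc atLeast0LessThan)
qed

lemma win: "cops_winning V E k (\<lambda>xs. set xs \<inter> B)"
  unfolding cops_winning_def
proof (intro conjI allI impI notI)
  fix t and n :: nat
  let ?C = "t ` {..<n} \<inter> B"
  have C': "t ` {..<Suc n} \<inter> B = (if t n \<in> B then insert (t n) ?C else ?C)"
    by (auto simp: lessThan_Suc)
  have "legal_cop_move k (t n) ?C (t ` {..<Suc n} \<inter> B)"
  proof (cases "t n \<in> B - ?C")
    case True
    hence "?C \<subset> B" by blast
    hence "card ?C < k" using finB cB by (metis psubset_card_mono)
    thus ?thesis using C' True unfolding legal_cop_move_def by auto
  next
    case False
    hence "t ` {..<Suc n} \<inter> B = ?C" using C' by auto
    thus ?thesis unfolding legal_cop_move_def by simp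
  qed
  thus "legal_cop_move k (t n) (cop_config (\<lambda>xs. set xs \<inter> B) t n) (cop_config (\<lambda>xs. set xs \<inter> B) t (Suc n))"
    by (simp only: cc0)
next
  assume "\<exists>t. \<forall>n. consistent_prefix V E (\<lambda>xs. set xs \<inter> B) t n"
  then obtain t where ct: "\<And>n. consistent_prefix V E (\<lambda>xs. set xs \<inter> B) t n" by blast
  have st: "adj E (t j) (t (Suc j)) \<and> t (Suc j) \<notin> t ` {..<Suc j} \<inter> B" for j
    using ct[of "Suc j"] unfolding consistent_prefix_def cc0 by blast
  let ?P = "{n. t n \<in> B}"
  have inj: "inj_on t ?P"
  proof (rule inj_onI)
    have key: "t i \<noteq> t j" if ij: "i < j" "j \<in> ?P" for i j
    proof -
      obtain j' where j': "j = Suc j'" using ij(1) by (cases j) auto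
      have "i \<in> {..<Suc j'}" using ij(1) j' by simp
      hence "t i \<in> t ` {..<Suc j'}" by (rule imageI)
      moreover have "t j \<in> B" using ij(2) by simp
      moreover have "t j \<notin> t ` {..<Suc j'} \<inter> B" using st[of j'] j' by simp
      ultimately show ?thesis by force
    qed
    fix i j assume "i \<in> ?P" "j \<in> ?P" "t i = t j"
    thus "i = j" using key by (metis linorder_neqE_nat)
  qed
  have "t ` ?P \<subseteq> B" by blast
  hence "finite (t ` ?P)" using finB finite_subset by blast
  hence finP: "finite ?P" using inj finite_imageD by blast
  have alt: "n \<in> ?P \<or> Suc n \<in> ?P" for n
    using adj_cases[of "t n" "t (Suc n)"] st[of n] unfolding mol_V_def by blast
  obtain m where "\<forall>n\<in>?P. n < m" using finP finite_nat_set_iff_bounded by blast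
  thus False using alt[of m] by auto
qed

lemma thief_move:
  assumes "v \<in> V" "finite C" "card C < k"
  shows "\<exists>u. adj E v u \<and> u \<notin> C"
proof -
  have nB: "\<not> B \<subseteq> C"
  proof
    assume "B \<subseteq> C" hence "card B \<le> card C" using assms(2) by (rule card_mono[rotated])
    thus False using assms(3) cB by simp
  qed
  show ?thesis
  proof (cases "v \<in> W")
    case True
    then obtain b where "b \<in> B" "b \<notin> C" using nB by blast
    thus ?thesis using edge_WB[OF True] by blast
  next
    case False
    hence vB: "v \<in> B" using assms(1) unfolding mol_V_def by blast
    show ?thesis
    proof (cases "W \<subseteq> C")
      case False
      then obtain w where "w \<in> W" "w \<notin> C" by blast
      thus ?thesis using edge_WB[OF _ vB] by blast
    next
      case True
      have "card ((C \<inter> B) \<union> W) = card (C \<inter> B) + card W"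
        by (rule card_Un_disjoint) (use assms(2) finW disj in auto)
      moreover have "card ((C \<inter> B) \<union> W) \<le> card C"
        by (rule card_mono) (use assms(2) True in auto)
      ultimately have "card (C \<inter> B) < connectivity B Bb" using assms(3) hk' cW by simp
      from L3[OF _ this vB] obtain u where u: "u \<in> B" "u \<notin> C \<inter> B" "adj Bb v u" by blast
      thus ?thesis using adj_Bb by blast
    qed
  qed
qed

lemma cons_V: "consistent_prefix V E \<sigma> t n \<Longrightarrow> t n \<in> V"
proof (cases n)
  case 0 thus "consistent_prefix V E \<sigma> t n \<Longrightarrow> t n \<in> V" unfolding consistent_prefix_def by simp
next
  case (Suc j)
  assume "consistent_prefix V E \<sigma> t n"
  hence "adj E (t j) (t n)" using Suc unfolding consistent_prefix_def by blast
  thus "t n \<in> V" using adj_cases by blast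
qed

lemma lower:
  assumes "m < k"
  shows "\<not> cops_winning V E m \<sigma>"
proof
  assume w: "cops_winning V E m \<sigma>"
  obtain b0 where b0: "b0 \<in> B" using cB k1 by fastforce
  define f where "f = (\<lambda>xs. SOME u. adj E (last xs) u \<and> u \<notin> \<sigma> xs)"
  define t where "t = (\<lambda>i. last (hist f b0 i))"
  have tS: "t (Suc n) = f (map t [0..<Suc n])" for n
    unfolding t_def hist_map by simp
  have tl: "last (map t [0..<Suc n]) = t n" for n by simp
  have inv: "consistent_prefix V E \<sigma> t n \<and> finite (cop_config \<sigma> t n) \<and> card (cop_config \<sigma> t n) \<le> m" for n
  proof (induction n)
    case 0
    have "t 0 = b0" unfolding t_def by simp
    thus ?case using b0 unfolding consistent_prefix_def mol_V_def by simp
  next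
    case (Suc n)
    have legal: "legal_cop_move m (t n) (cop_config \<sigma> t n) (cop_config \<sigma> t (Suc n))"
      using w Suc.IH unfolding cops_winning_def by blast
    from legal_card[OF legal] Suc.IH
    have fc: "finite (cop_config \<sigma> t (Suc n))" "card (cop_config \<sigma> t (Suc n)) \<le> m" by auto
    have "t n \<in> V" using cons_V Suc.IH by blast
    from thief_move[OF this fc(1)] fc(2) assms
    have "\<exists>u. adj E (t n) u \<and> u \<notin> cop_config \<sigma> t (Suc n)" by simp
    hence ex: "\<exists>u. adj E (last (map t [0..<Suc n])) u \<and> u \<notin> \<sigma> (map t [0..<Suc n])"
      by (simp only: tl cop_config.simps)
    have "adj E (last (map t [0..<Suc n])) (t (Suc n)) \<and> t (Suc n) \<notin> \<sigma> (map t [0..<Suc n])"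
      unfolding tS f_def by (rule someI_ex[OF ex])
    hence step: "adj E (t n) (t (Suc n)) \<and> t (Suc n) \<notin> cop_config \<sigma> t (Suc n)"
      by simp
    have "consistent_prefix V E \<sigma> t (Suc n)"
      using Suc.IH step unfolding consistent_prefix_def by (metis less_Suc_eq)
    thus ?case using fc by blast
  qed
  hence "\<exists>t. \<forall>n. consistent_prefix V E \<sigma> t n" by blast
  thus False using w unfolding cops_winning_def by blast
qed

lemma ent_eq: "entanglement V E = k"
  unfolding entanglement_def
proof (rule Least_equality)
  show "\<exists>\<sigma>. cops_winning V E k \<sigma>" using win by blast
  fix y assume "\<exists>\<sigma>. cops_winning V E y \<sigma>"
  thus "k \<le> y" using lower by (meson not_le)
qed

end

theorem mainTheorem5:
  fixes k h :: nat and B W :: "'a set" and \<B> :: "'a set set"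
  assumes "is_molecule k h B \<B> W"
  shows "connectivity (mol_V B W) (mol_E B \<B> W) = k
    \<and> is_edge_cover (mol_V B W) (mol_E B \<B> W) B
    \<and> (\<forall>X. is_edge_cover (mol_V B W) (mol_E B \<B> W) X \<longrightarrow> card B \<le> card X)
    \<and> cyclicity (mol_V B W) (mol_E B \<B> W) = k
    \<and> entanglement (mol_V B W) (mol_E B \<B> W) = k"
proof -
  interpret mol k h B W \<B> using assms by unfold_locales
  show ?thesis using conn_eq cover_B cover_min cyc_eq ent_eq cB by auto
qed

end
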